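(* For $|q|<1$ and nonzero complex $x,y,u,v$, $$\begin{aligned}&4qxyuv[-q^2x^2,-q^2y^2,-q^2u^2,-q^2v^2;q^2]_\infty+4q^{1/2}xy[-q^2x^2,-q^2y^2,-qu^2,-qv^2;q^2]_\infty\\&\quad+4q^{1/2}uv[-qx^2,-qy^2,-q^2u^2,-q^2v^2;q^2]_\infty+4[-qx^2,-qy^2,-qu^2,-qv^2;q^2]_\infty\\&=\frac{(q^{1/2};q^{1/2})_\infty^4}{(q^2;q^2)_\infty^4}\Big([-q^{1/4}x,-q^{1/4}y,-q^{1/4}u,-q^{1/4}v;q^{1/2}]_\infty+[q^{1/4}x,q^{1/4}y,-q^{1/4}u,-q^{1/4}v;q^{1/2}]_\infty\\&\qquad+[-q^{1/4}x,-q^{1/4}y,q^{1/4}u,q^{1/4}v;q^{1/2}]_\infty+[q^{1/4}x,q^{1/4}y,q^{1/4}u,q^{1/4}v;q^{1/2}]_\infty\Big).\end{aligned}$$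
   Context: $(z;p)_\infty=\prod_{k\ge0}(1-zp^k)$, $[z;p]_\infty=(z;p)_\infty(p/z;p)_\infty$, and $[z_1,\dots,z_n;p]_\infty=\prod_j[z_j;p]_\infty$. Fractional powers of $q$ are fixed consistently (e.g. $q^{1/4}$ any fixed fourth root, $q^{1/2}=(q^{1/4})^2$). *)

theory Defs
  imports "HOL-Analysis.Analysis"
begin

definition qpoch :: "complex \<Rightarrow> complex \<Rightarrow> complex" where
  "qpoch z p = (\<Prod>k. (1 - z * p ^ k))"

definition qtheta :: "complex \<Rightarrow> complex \<Rightarrow> complex" where
  "qtheta z p = qpoch z p * qpoch (p / z) p"

definition qthetas :: "complex list \<Rightarrow> complex \<Rightarrow> complex" where
  "qthetas zs p = prod_list (map (\<lambda>z. qtheta z p) zs)"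

end

theory Submission
  imports Defs
begin


definition qf :: "complex \<Rightarrow> nat \<Rightarrow> complex" where
  "qf q N = (\<Prod>i<N. (1 - q ^ Suc i))"

definition gb :: "complex \<Rightarrow> nat \<Rightarrow> nat \<Rightarrow> complex" where
  "gb q N j = (if j \<le> N then qf q N / (qf q j * qf q (N - j)) else 0)"

lemma qf_nz: assumes "norm q < 1" shows "qf q N \<noteq> 0"
proof -
  have "q ^ Suc i \<noteq> 1" for i
  proof
    assume "q ^ Suc i = 1"
    then have "norm q ^ Suc i = 1" by (metis norm_one norm_power)
    moreover have "norm q ^ Suc i < 1" using assms power_less_one_iff[of "norm q" "Suc i"] by simp
    ultimately show False by simp
  qed
  then have "\<forall>i\<in>{..<N}. 1 - q ^ Suc i \<noteq> 0" by (auto simp del: power_Suc)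
  then show ?thesis unfolding qf_def by (subst prod_zero_iff) (auto simp del: power_Suc)
qed

lemma qf_Suc: "qf q (Suc N) = qf q N * (1 - q ^ Suc N)"
  by (simp add: qf_def)

lemma qf_0 [simp]: "qf q 0 = 1" by (simp add: qf_def)

lemma pascal_alg:
  fixes Nn A B r c e :: complex
  assumes "A \<noteq> 0" "B \<noteq> 0" "c \<noteq> 0" "e \<noteq> 0"
  shows "Nn * (c + r * e) / (A * c * (B * e)) = Nn / (A * (B * e)) + r * (Nn / (A * c * B))"
  using assms by (simp add: field_simps)

lemma gb_0 [simp]: "norm q < 1 \<Longrightarrow> gb q N 0 = 1"
  using qf_nz[of q N] by (simp add: gb_def)

lemma gb_N [simp]: "norm q < 1 \<Longrightarrow> gb q N N = 1"
  using qf_nz[of q N] by (simp add: gb_def)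

lemma gb_gt [simp]: "N < j \<Longrightarrow> gb q N j = 0"
  by (simp add: gb_def)

lemma gb_pascal:
  assumes q: "norm q < 1" and j: "1 \<le> j"
  shows "gb q (Suc N) j = gb q N (j - 1) + q ^ j * gb q N j"
proof (cases "j \<le> N")
  case True
  obtain i where ij: "j = Suc i" using j by (cases j) auto
  obtain d where dN: "N = j + d" using True le_Suc_ex by blast
  have A: "qf q j = qf q i * (1 - q ^ j)" using ij by (simp add: qf_Suc)
  have B: "qf q (Suc N - j) = qf q d * (1 - q ^ Suc d)" using dN by (simp add: qf_Suc)
  have C: "Suc N - j = Suc d" "N - j = d" "N - (j - 1) = Suc d" using dN ij by auto
  have nz: "qf q i \<noteq> 0" "qf q d \<noteq> 0" "qf q j \<noteq> 0" "qf q (Suc d) \<noteq> 0" "qf q N \<noteq> 0"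
    using qf_nz[OF q] by auto
  have nz2: "1 - q ^ j \<noteq> 0" "1 - q ^ Suc d \<noteq> 0"
    using nz A qf_Suc[of q d] by auto
  have qq: "q ^ j * q ^ Suc d = q ^ Suc N" using dN by (simp add: power_add[symmetric])
  have "gb q (Suc N) j = qf q N * (1 - q ^ Suc N) / (qf q i * (1 - q ^ j) * (qf q d * (1 - q ^ Suc d)))"
    using True A B C by (simp add: gb_def qf_Suc)
  also have "\<dots> = qf q N / (qf q i * (qf q d * (1 - q ^ Suc d))) + q ^ j * (qf q N / (qf q i * (1 - q ^ j) * qf q d))"
  proof -
    have e: "1 - q ^ Suc N = (1 - q ^ j) + q ^ j * (1 - q ^ Suc d)" using qq by (simp add: algebra_simps)
    show ?thesis unfolding e by (rule pascal_alg[OF nz(1,2) nz2])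
  qed
  also have "\<dots> = gb q N (j - 1) + q ^ j * gb q N j"
    using True C ij A by (simp add: gb_def qf_Suc)
  finally show ?thesis .
next
  case False
  then show ?thesis
  proof (cases "j = Suc N")
    case True
    then show ?thesis using q by simp
  next
    case False
    then show ?thesis using \<open>\<not> j \<le> N\<close> by simp
  qed
qed


lemma tri_Suc: "Suc j * (Suc j - 1) div 2 = j * (j - 1) div 2 + j"
proof -
  have "even (j * (j - 1))" by (cases j) auto
  then have "j * (j - 1) div 2 * 2 = j * (j - 1)" by simp
  moreover have "Suc j * j = j * (j - 1) + 2 * j" by (cases j) (auto simp: algebra_simps)
  ultimately show ?thesis by simp
qed

definition cc :: "complex \<Rightarrow> nat \<Rightarrow> complex" where
  "cc q j = (-1) ^ j * q ^ (j * (j - 1) div 2)"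

lemma cc_Suc: "cc q (Suc j) = - cc q j * q ^ j"
  unfolding cc_def tri_Suc by (simp add: power_add)

lemma qbinom:
  assumes q: "norm q < 1"
  shows "(\<Prod>i<N. (Y - X * q ^ i)) = (\<Sum>j\<le>N. gb q N j * cc q j * X ^ j * Y ^ (N - j))"
proof (induction N arbitrary: X)
  case 0
  then show ?case using q by (simp add: cc_def)
next
  case (Suc N)
  define h where "h j = gb q N j * cc q j * q ^ j * X ^ j * Y ^ (Suc N - j)" for j
  define k where "k j = gb q N j * cc q (Suc j) * X ^ Suc j * Y ^ (N - j)" for j
  define G where "G j = gb q (Suc N) j * cc q j * X ^ j * Y ^ (Suc N - j)" for j
  have "(\<Prod>i<Suc N. (Y - X * q ^ i)) = (Y - X) * (\<Prod>i<N. (Y - (X * q) * q ^ i))"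
    by (subst prod.lessThan_Suc_shift) (simp add: mult_ac)
  also have "\<dots> = (Y - X) * (\<Sum>j\<le>N. gb q N j * cc q j * (X * q) ^ j * Y ^ (N - j))"
    by (simp add: Suc.IH)
  also have "\<dots> = (\<Sum>j\<le>N. h j + k j)"
    unfolding sum_distrib_left
  proof (rule sum.cong)
    fix j assume "j \<in> {..N}"
    then have "Y ^ (Suc N - j) = Y * Y ^ (N - j)" by (simp add: Suc_diff_le)
    then show "(Y - X) * (gb q N j * cc q j * (X * q) ^ j * Y ^ (N - j)) = h j + k j"
      unfolding h_def k_def cc_Suc by (simp add: power_mult_distrib algebra_simps)
  qed simp
  also have "\<dots> = (\<Sum>j\<le>N. h j) + (\<Sum>j\<le>N. k j)" by (rule sum.distrib)
  also have "(\<Sum>j\<le>N. h j) = h 0 + (\<Sum>j\<le>N. h (Suc j))"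
  proof -
    have "(\<Sum>j\<le>Suc N. h j) = h 0 + (\<Sum>j\<le>N. h (Suc j))" by (rule sum.atMost_Suc_shift)
    moreover have "(\<Sum>j\<le>Suc N. h j) = (\<Sum>j\<le>N. h j)" by (simp add: h_def)
    ultimately show ?thesis by simp
  qed
  also have "h 0 + (\<Sum>j\<le>N. h (Suc j)) + (\<Sum>j\<le>N. k j) = G 0 + (\<Sum>j\<le>N. G (Suc j))"
  proof -
    have "G 0 = h 0" using q by (simp add: G_def h_def)
    moreover have "G (Suc j) = k j + h (Suc j)" for j
    proof -
      have p: "gb q (Suc N) (Suc j) = gb q N j + q ^ Suc j * gb q N (Suc j)"
        using gb_pascal[OF q, of "Suc j" N] by simp
      show ?thesis unfolding G_def h_def k_def p by (simp add: algebra_simps)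
    qed
    ultimately show ?thesis by (simp add: sum.distrib)
  qed
  also have "\<dots> = (\<Sum>j\<le>Suc N. G j)" by (rule sum.atMost_Suc_shift[symmetric])
  finally show ?case by (simp add: G_def)
qed


lemma prod_split_add: "(\<Prod>i<m+n. f i) = (\<Prod>i<m. f i) * (\<Prod>i<n. f (m + i))"
  for f :: "nat \<Rightarrow> complex"
  by (induction n) (auto simp: mult_ac)

lemma prod_odd_pow: "(\<Prod>i<n. (a::complex) ^ (2 * i + 1)) = a ^ (n\<^sup>2)"
proof (induction n)
  case 0 then show ?case by simp
next
  case (Suc n)
  have "(Suc n)\<^sup>2 = n\<^sup>2 + (2 * n + 1)" by (simp add: power2_eq_square)
  then show ?case using Suc by (simp add: power_add)
qed

lemma expo_id:
  fixes j n :: nat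
  assumes "j \<le> 2 * n"
  shows "2 * (j * (j - 1) div 2) + j + 2 * n * (2 * n - j) = 3 * n\<^sup>2 + (if n \<le> j then j - n else n - j)\<^sup>2"
proof -
  have ev: "even (j * (j - 1))" by (cases j) auto
  then have "2 * (j * (j - 1) div 2) = j * (j - 1)" by simp
  moreover have "j * (j - 1) + j = j * j" by (cases j) auto
  ultimately have L: "2 * (j * (j - 1) div 2) + j = j * j" by simp
  show ?thesis
  proof (cases "n \<le> j")
    case True
    then obtain e where e: "j = n + e" using le_Suc_ex by blast
    with assms have "e \<le> n" by simp
    then obtain f where f: "n = e + f" using le_Suc_ex by blast
    show ?thesis using L True unfolding e f by (simp add: power2_eq_square algebra_simps)
  next
    case False
    then obtain e where e: "n = j + e" using le_Suc_ex by (metis nat_le_linear)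
    show ?thesis using L False unfolding e by (simp add: power2_eq_square algebra_simps)
  qed
qed

lemma fin_jtp0:
  fixes a x :: complex and n :: nat
  assumes a0: "a \<noteq> 0" and a1: "norm a < 1" and x0: "x \<noteq> 0"
  defines "PA \<equiv> (\<Prod>i<n. (1 - (-(a*x)) * (a^2) ^ i))"
  defines "PB \<equiv> (\<Prod>i<n. (1 - (a^2 / (-(a*x))) * (a^2) ^ i))"
  shows "x ^ n * PA * PB = (\<Sum>j\<le>2*n. gb (a^2) (2*n) j * a ^ ((if n \<le> j then j - n else n - j)\<^sup>2) * x ^ j)"
proof -
  have q: "norm (a^2) < 1" using a1 by (simp add: norm_power power_less_one_iff)
  define f where "f i = a ^ (2*n) - (-(a*x)) * (a^2) ^ i" for i
  have QB: "(\<Prod>i<2*n. f i) = (\<Sum>j\<le>2*n. gb (a^2) (2*n) j * cc (a^2) j * (-(a*x)) ^ j * (a^(2*n)) ^ (2*n - j))"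
    unfolding f_def by (rule qbinom[OF q])
  have T: "cc (a^2) j * (-(a*x)) ^ j * (a^(2*n)) ^ (2*n - j) = a ^ (3 * n\<^sup>2) * (a ^ ((if n \<le> j then j - n else n - j)\<^sup>2) * x ^ j)"
    if "j \<le> 2*n" for j
  proof -
    have "cc (a^2) j * (-(a*x)) ^ j * (a^(2*n)) ^ (2*n - j) = a ^ (2 * (j * (j - 1) div 2) + j + 2 * n * (2 * n - j)) * x ^ j"
    proof -
      have "j + (j*j - j) = j*j" by (cases j) auto
      then have aux: "a^j * a^(j*j-j) = a^(j*j)" by (metis power_add)
      show ?thesis
        unfolding cc_def by (simp add: power_mult_distrib power_add power_mult[symmetric] power_minus' algebra_simps aux)
    qed
    also have "\<dots> = a ^ (3 * n\<^sup>2) * (a ^ ((if n \<le> j then j - n else n - j)\<^sup>2) * x ^ j)"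
      unfolding expo_id[OF that] by (simp add: power_add)
    finally show ?thesis .
  qed
  have S2: "(\<Prod>i<n. f (n + i)) = a ^ (2 * n\<^sup>2) * PA"
  proof -
    have pc: "(a^2)^n = (a^n)^2" by (metis power_mult mult.commute)
    have "f (n + i) = a ^ (2*n) * (1 - (-(a*x)) * (a^2) ^ i)" for i
      unfolding f_def by (simp add: power_add power_mult algebra_simps pc)
    then have "(\<Prod>i<n. f (n + i)) = (a ^ (2*n)) ^ n * PA"
      unfolding PA_def by (simp add: prod.distrib)
    then show ?thesis by (simp add: power_mult[symmetric] power2_eq_square mult_ac)
  qed
  have S1: "(\<Prod>i<n. f i) = x ^ n * a ^ (n\<^sup>2) * PB"
  proof -
    have "(\<Prod>i<n. f i) = (\<Prod>i<n. f (n - Suc i))" by (rule prod.nat_diff_reindex[symmetric])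
    also have "\<dots> = (\<Prod>i<n. x * a ^ (2 * (n - Suc i) + 1) * (1 - (a^2 / (-(a*x))) * (a^2) ^ i))"
    proof (rule prod.cong)
      fix i assume "i \<in> {..<n}"
      then obtain k where k: "n = Suc i + k" using le_Suc_ex by (metis lessThan_iff less_eq_Suc_le)
      show "f (n - Suc i) = x * a ^ (2 * (n - Suc i) + 1) * (1 - (a^2 / (-(a*x))) * (a^2) ^ i)"
      proof -
        have pcg: "(a^2)^m = (a^m)^2" for m by (metis power_mult mult.commute)
        show ?thesis unfolding f_def k using a0 x0 by (simp add: power_add power_mult field_simps pcg power2_eq_square)
      qed
    qed simp
    also have "\<dots> = x ^ n * (\<Prod>i<n. a ^ (2 * (n - Suc i) + 1)) * PB"
      unfolding PB_def by (simp add: prod.distrib)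
    also have "(\<Prod>i<n. a ^ (2 * (n - Suc i) + 1)) = a ^ (n\<^sup>2)"
      using prod.nat_diff_reindex[of "\<lambda>i. a ^ (2 * i + 1)" n] prod_odd_pow[where a=a and n=n] by simp
    finally show ?thesis .
  qed
  have "(\<Prod>i<2*n. f i) = a ^ (3 * n\<^sup>2) * (x ^ n * PA * PB)"
  proof -
    have e3: "a ^ (3 * n\<^sup>2) = a ^ n\<^sup>2 * (a ^ n\<^sup>2 * a ^ n\<^sup>2)"
      by (simp add: numeral_3_eq_3 power_add)
    have sp: "(\<Prod>i<2*n. f i) = (\<Prod>i<n. f i) * (\<Prod>i<n. f (n+i))"
      unfolding mult_2 by (rule prod_split_add)
    have e2: "a ^ (2 * n\<^sup>2) = a ^ n\<^sup>2 * a ^ n\<^sup>2" by (simp add: mult_2 power_add)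
    show ?thesis unfolding sp S1 S2 e3 e2 by (simp add: algebra_simps)
  qed
  also have "(\<Prod>i<2*n. f i) = a ^ (3 * n\<^sup>2) * (\<Sum>j\<le>2*n. gb (a^2) (2*n) j * a ^ ((if n \<le> j then j - n else n - j)\<^sup>2) * x ^ j)"
    unfolding QB sum_distrib_left
  proof (rule sum.cong)
    fix j assume "j \<in> {..2*n}"
    then have j: "j \<le> 2*n" by simp
    let ?g = "gb (a^2) (2*n) j"
    have "?g * cc (a^2) j * (-(a*x)) ^ j * (a^(2*n)) ^ (2*n - j) = ?g * (cc (a^2) j * (-(a*x)) ^ j * (a^(2*n)) ^ (2*n - j))"
      by (simp only: mult.assoc)
    also have "\<dots> = ?g * (a ^ (3 * n\<^sup>2) * (a ^ ((if n \<le> j then j - n else n - j)\<^sup>2) * x ^ j))"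
      by (simp only: T[OF j])
    finally show "?g * cc (a^2) j * (-(a*x)) ^ j * (a^(2*n)) ^ (2*n - j) = a ^ (3 * n\<^sup>2) * (?g * a ^ ((if n \<le> j then j - n else n - j)\<^sup>2) * x ^ j)"
      by (simp only: mult_ac)
  qed simp
  finally show ?thesis using a0 by simp
qed


lemma fin_jtp:
  fixes a x :: complex and n :: nat
  assumes a0: "a \<noteq> 0" and a1: "norm a < 1" and x0: "x \<noteq> 0"
  shows "(\<Sum>m\<le>n. gb (a^2) (2*n) (n+m) * a^(m\<^sup>2) * x^m + gb (a^2) (2*n) (n-m) * a^(m\<^sup>2) * (1/x)^m)
     = (\<Prod>i<n. (1 - (-(a*x)) * (a^2) ^ i)) * (\<Prod>i<n. (1 - (a^2 / (-(a*x))) * (a^2) ^ i)) + gb (a^2) (2*n) n"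
proof -
  define PA where "PA = (\<Prod>i<n. (1 - (-(a*x)) * (a^2) ^ i))"
  define PB where "PB = (\<Prod>i<n. (1 - (a^2 / (-(a*x))) * (a^2) ^ i))"
  define F where "F j = gb (a^2) (2*n) j * a ^ ((if n \<le> j then j - n else n - j)\<^sup>2) * x ^ j" for j
  have J: "x ^ n * PA * PB = (\<Sum>j\<le>2*n. F j)"
    unfolding PA_def PB_def F_def by (rule fin_jtp0[OF a0 a1 x0])
  have s1: "(\<Sum>j\<le>2*n. F j) = (\<Sum>j=0..n. F j) + (\<Sum>j=1..n. F (j + n))"
  proof -
    have "(\<Sum>j\<le>2*n. F j) = (\<Sum>j=0..n+n. F j)" by (simp add: atMost_atLeast0 mult_2)
    also have "\<dots> = (\<Sum>j=0..n. F j) + (\<Sum>j=n+1..n+n. F j)" by (rule sum.ub_add_nat) simp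
    also have "(\<Sum>j=n+1..n+n. F j) = (\<Sum>j=1..n. F (j + n))"
      using sum.shift_bounds_cl_nat_ivl[of F 1 n n] by (simp add: add.commute)
    finally show ?thesis .
  qed
  have s2: "(\<Sum>m\<le>n. F (n + m)) = F n + (\<Sum>j=1..n. F (j + n))"
  proof -
    have "(\<Sum>m\<le>n. F (n + m)) = (\<Sum>m=0..n. F (n + m))" by (simp add: atMost_atLeast0)
    also have "\<dots> = F n + (\<Sum>m=Suc 0..n. F (n + m))" by (subst sum.atLeast_Suc_atMost) simp_all
    finally show ?thesis by (simp add: add.commute)
  qed
  have s3: "(\<Sum>m\<le>n. F (n - m)) = (\<Sum>j=0..n. F j)"
    using sum.atLeastAtMost_rev[of F 0 n] by (simp add: atMost_atLeast0)
  have "x ^ n * (\<Sum>m\<le>n. gb (a^2) (2*n) (n+m) * a^(m\<^sup>2) * x^m + gb (a^2) (2*n) (n-m) * a^(m\<^sup>2) * (1/x)^m)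
      = (\<Sum>m\<le>n. F (n + m) + F (n - m))"
    unfolding sum_distrib_left
  proof (rule sum.cong)
    fix m assume "m \<in> {..n}"
    then have m: "m \<le> n" by simp
    have xx: "x ^ n * (1/x)^m = x ^ (n - m)"
      using m x0 by (simp add: power_diff power_one_over field_simps)
    have "F (n + m) = gb (a^2) (2*n) (n+m) * a^(m\<^sup>2) * (x ^ n * x^m)"
      unfolding F_def by (simp add: power_add)
    moreover have "F (n - m) = gb (a^2) (2*n) (n-m) * a^(m\<^sup>2) * (x ^ n * (1/x)^m)"
      unfolding F_def xx using m by (cases "m = 0") auto
    ultimately show "x ^ n * (gb (a^2) (2*n) (n+m) * a^(m\<^sup>2) * x^m + gb (a^2) (2*n) (n-m) * a^(m\<^sup>2) * (1/x)^m) = F (n + m) + F (n - m)"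
      by (simp add: algebra_simps)
  qed simp
  also have "\<dots> = x ^ n * PA * PB + F n"
    unfolding sum.distrib s2 s3 J s1 by simp
  also have "F n = x ^ n * gb (a^2) (2*n) n" unfolding F_def by simp
  finally have "x ^ n * (\<Sum>m\<le>n. gb (a^2) (2*n) (n+m) * a^(m\<^sup>2) * x^m + gb (a^2) (2*n) (n-m) * a^(m\<^sup>2) * (1/x)^m)
      = x ^ n * (PA * PB + gb (a^2) (2*n) n)" by (simp add: algebra_simps)
  then show ?thesis using x0 unfolding PA_def PB_def by simp
qed



lemma qpoch_conv:
  fixes z p :: complex
  assumes "norm p < 1"
  shows "convergent_prod (\<lambda>i. 1 - z * p ^ i)"
proof -
  have "summable (\<lambda>i. norm ((1 - z * p ^ i) - 1))"
    using assms by (simp add: norm_mult norm_power summable_mult summable_geometric)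
  then show ?thesis
    by (intro abs_convergent_prod_imp_convergent_prod summable_imp_abs_convergent_prod)
qed

lemma qpoch_lim:
  fixes z p :: complex
  assumes "norm p < 1"
  shows "(\<lambda>n. \<Prod>i<n. (1 - z * p ^ i)) \<longlonglongrightarrow> qpoch z p"
proof -
  have "(\<lambda>n. \<Prod>i\<le>n. (1 - z * p ^ i)) \<longlonglongrightarrow> qpoch z p"
    unfolding qpoch_def by (rule convergent_prod_LIMSEQ[OF qpoch_conv[OF assms]])
  then have "(\<lambda>n. \<Prod>i<Suc n. (1 - z * p ^ i)) \<longlonglongrightarrow> qpoch z p"
    by (simp add: lessThan_Suc_atMost)
  then show ?thesis by (rule LIMSEQ_imp_Suc)
qed

lemma qpoch_nz:
  fixes p :: complex
  assumes "norm p < 1"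
  shows "qpoch p p \<noteq> 0"
  unfolding qpoch_def
proof (rule prodinf_nonzero[OF qpoch_conv[OF assms]])
  fix i
  have "norm (p * p ^ i) < 1"
    using assms power_less_one_iff[of "norm p" "Suc i"] by (simp add: norm_mult norm_power)
  then show "1 - p * p ^ i \<noteq> 0" by auto
qed

lemma qf_lim:
  assumes "norm q < 1"
  shows "qf q \<longlonglongrightarrow> qpoch q q"
proof -
  have "qf q = (\<lambda>n. \<Prod>i<n. (1 - q * q ^ i))" by (auto simp: qf_def)
  then show ?thesis using qpoch_lim[OF assms, of q] by simp
qed

lemma lower_bound_lim:
  fixes X :: "nat \<Rightarrow> complex"
  assumes "X \<longlonglongrightarrow> L" "L \<noteq> 0" "\<And>n. X n \<noteq> 0"
  shows "\<exists>\<beta>>0. \<forall>n. \<beta> \<le> norm (X n)"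
proof -
  have "(\<lambda>n. inverse (X n)) \<longlonglongrightarrow> inverse L" using assms by (intro tendsto_inverse)
  then have "Bseq (\<lambda>n. inverse (X n))" by (intro convergent_imp_Bseq) (auto simp: convergent_def)
  then obtain K where K: "K > 0" "\<And>n. norm (inverse (X n)) \<le> K" by (auto elim: BseqE)
  have "1 / K \<le> norm (X n)" for n
  proof -
    have "inverse (norm (X n)) \<le> K" using K(2)[of n] by (simp add: norm_inverse)
    then show ?thesis using assms(3)[of n] K(1) by (simp add: field_simps)
  qed
  then show ?thesis using K(1) by (intro exI[of _ "1/K"]) auto
qed

lemma gb_bound:
  assumes q: "norm q < 1"
  shows "\<exists>B>0. \<forall>N j. norm (gb q N j) \<le> B"
proof -
  have L: "qf q \<longlonglongrightarrow> qpoch q q" by (rule qf_lim[OF q])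
  obtain \<beta> where b: "\<beta> > 0" "\<And>n. \<beta> \<le> norm (qf q n)"
    using lower_bound_lim[OF L qpoch_nz[OF q] qf_nz[OF q]] by auto
  have "Bseq (qf q)" using L by (intro convergent_imp_Bseq) (auto simp: convergent_def)
  then obtain U where U: "U > 0" "\<And>n. norm (qf q n) \<le> U" by (auto elim: BseqE)
  have "norm (gb q N j) \<le> U / (\<beta> * \<beta>)" for N j
  proof (cases "j \<le> N")
    case True
    have "norm (gb q N j) = norm (qf q N) / (norm (qf q j) * norm (qf q (N - j)))"
      using True by (simp add: gb_def norm_divide norm_mult)
    also have "\<dots> \<le> U / (\<beta> * \<beta>)"
      using b U by (intro frac_le mult_mono) auto
    finally show ?thesis .
  next
    case False then show ?thesis using U b by simp
  qed
  then show ?thesis using U b by (intro exI[of _ "U / (\<beta> * \<beta>)"]) auto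
qed

lemma summable_sq:
  fixes r s :: real
  assumes "0 \<le> r" "r < 1" "0 \<le> s"
  shows "summable (\<lambda>k. r ^ (k\<^sup>2) * s ^ k)"
proof (rule summable_comparison_test_ev)
  show "summable (\<lambda>k. (1/2::real) ^ k)" by (rule summable_geometric) simp
  have "(\<lambda>k. r ^ k * s) \<longlonglongrightarrow> 0 * s"
    using assms by (intro tendsto_mult LIMSEQ_power_zero tendsto_const) auto
  then have "eventually (\<lambda>k. r ^ k * s < 1/2) sequentially"
    by (intro order_tendstoD) auto
  then show "eventually (\<lambda>k. norm (r ^ (k\<^sup>2) * s ^ k) \<le> (1/2) ^ k) sequentially"
  proof eventually_elim
    case (elim k)
    have "norm (r ^ (k\<^sup>2) * s ^ k) = (r ^ k * s) ^ k"
      using assms by (simp add: power2_eq_square power_mult power_mult_distrib)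
    also have "\<dots> \<le> (1/2) ^ k" using elim assms by (intro power_mono) auto
    finally show ?case .
  qed
qed



lemma qf_lims:
  assumes q: "norm q < 1"
  shows "(\<lambda>n. qf q (2*n)) \<longlonglongrightarrow> qpoch q q"
    and "(\<lambda>n. qf q (n + k)) \<longlonglongrightarrow> qpoch q q"
    and "(\<lambda>n. qf q (n - k)) \<longlonglongrightarrow> qpoch q q"
proof -
  have L: "qf q \<longlonglongrightarrow> qpoch q q" by (rule qf_lim[OF q])
  have "strict_mono (\<lambda>n::nat. 2*n)" by (simp add: strict_mono_def)
  from LIMSEQ_subseq_LIMSEQ[OF L this] show "(\<lambda>n. qf q (2*n)) \<longlonglongrightarrow> qpoch q q" by (simp add: o_def)
  show "(\<lambda>n. qf q (n + k)) \<longlonglongrightarrow> qpoch q q" by (rule LIMSEQ_ignore_initial_segment[OF L])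
  show "(\<lambda>n. qf q (n - k)) \<longlonglongrightarrow> qpoch q q"
    by (rule filterlim_compose[OF L filterlim_minus_const_nat_at_top])
qed

lemma gb_lims:
  assumes q: "norm q < 1"
  shows "(\<lambda>n. gb q (2*n) (n+k)) \<longlonglongrightarrow> 1 / qpoch q q"
    and "(\<lambda>n. gb q (2*n) (n-k)) \<longlonglongrightarrow> 1 / qpoch q q"
proof -
  let ?L = "qpoch q q"
  have L0: "?L \<noteq> 0" by (rule qpoch_nz[OF q])
  have T: "(\<lambda>n. qf q (2*n) / (qf q (n+k) * qf q (n-k))) \<longlonglongrightarrow> ?L / (?L * ?L)"
    using qf_lims[OF q] L0 by (intro tendsto_intros) auto
  have e1: "eventually (\<lambda>n. qf q (2*n) / (qf q (n+k) * qf q (n-k)) = gb q (2*n) (n+k)) sequentially"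
    using eventually_ge_at_top[of k]
    by eventually_elim (simp add: gb_def)
  have e2: "eventually (\<lambda>n. qf q (2*n) / (qf q (n+k) * qf q (n-k)) = gb q (2*n) (n-k)) sequentially"
    using eventually_ge_at_top[of k]
    by eventually_elim (simp add: gb_def mult.commute)
  have "?L / (?L * ?L) = 1 / ?L" using L0 by simp
  then show "(\<lambda>n. gb q (2*n) (n+k)) \<longlonglongrightarrow> 1 / qpoch q q"
    and "(\<lambda>n. gb q (2*n) (n-k)) \<longlonglongrightarrow> 1 / qpoch q q"
    using Lim_transform_eventually[OF T e1] Lim_transform_eventually[OF T e2] by auto
qed


lemma jtp:
  fixes a x :: complex
  assumes a0: "a \<noteq> 0" and a1: "norm a < 1" and x0: "x \<noteq> 0"
  shows "(\<lambda>m. a^(m\<^sup>2) * (x^m + (1/x)^m)) sums (qpoch (a^2) (a^2) * qtheta (-(a*x)) (a^2) + 1)"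
proof -
  define q where "q = a^2"
  have q1: "norm q < 1" using a1 by (simp add: q_def norm_power power_less_one_iff)
  define L where "L = qpoch q q"
  have L0: "L \<noteq> 0" unfolding L_def by (rule qpoch_nz[OF q1])
  obtain B where B: "B > 0" "\<And>N j. norm (gb q N j) \<le> B" using gb_bound[OF q1] by auto
  define A where "A k n = (if k \<le> n then gb q (2*n) (n+k) * a^(k\<^sup>2) * x^k + gb q (2*n) (n-k) * a^(k\<^sup>2) * (1/x)^k else 0)" for k n
  define b where "b k = (1/L) * (a^(k\<^sup>2) * (x^k + (1/x)^k))" for k
  define M where "M k = B * (norm a ^ (k\<^sup>2) * norm x ^ k) + B * (norm a ^ (k\<^sup>2) * norm (1/x) ^ k)" for k
  have lim: "(\<lambda>n. A k n) \<longlonglongrightarrow> b k" for k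
  proof -
    have T: "(\<lambda>n. gb q (2*n) (n+k) * a^(k\<^sup>2) * x^k + gb q (2*n) (n-k) * a^(k\<^sup>2) * (1/x)^k)
        \<longlonglongrightarrow> (1/L) * a^(k\<^sup>2) * x^k + (1/L) * a^(k\<^sup>2) * (1/x)^k"
      unfolding L_def using gb_lims[OF q1, of k] by (intro tendsto_intros) auto
    have e: "eventually (\<lambda>n. gb q (2*n) (n+k) * a^(k\<^sup>2) * x^k + gb q (2*n) (n-k) * a^(k\<^sup>2) * (1/x)^k = A k n) sequentially"
      using eventually_ge_at_top[of k] by eventually_elim (simp add: A_def)
    have "(1/L) * a^(k\<^sup>2) * x^k + (1/L) * a^(k\<^sup>2) * (1/x)^k = b k"
      by (simp add: b_def algebra_simps)
    then show ?thesis using Lim_transform_eventually[OF T e] by simp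
  qed
  have bnd: "norm (A k n) \<le> M k" for k n
  proof (cases "k \<le> n")
    case True
    have "norm (A k n) \<le> norm (gb q (2*n) (n+k) * a^(k\<^sup>2) * x^k) + norm (gb q (2*n) (n-k) * a^(k\<^sup>2) * (1/x)^k)"
      using True unfolding A_def by (simp add: norm_triangle_ineq)
    also have "\<dots> \<le> M k"
      unfolding M_def norm_mult norm_power mult.assoc
      by (intro add_mono mult_right_mono B(2)) auto
    finally show ?thesis .
  next
    case False
    then show ?thesis using B(1) by (simp add: A_def M_def)
  qed
  have sM: "summable M"
  proof -
    have "summable (\<lambda>k. norm a ^ (k\<^sup>2) * norm x ^ k)" using a1 by (intro summable_sq) auto
    moreover have "summable (\<lambda>k. norm a ^ (k\<^sup>2) * norm (1/x) ^ k)" using a1 by (intro summable_sq) auto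
    ultimately show ?thesis unfolding M_def by (intro summable_add summable_mult)
  qed
  have tan: "summable (\<lambda>n. norm (b n)) \<and> ((\<lambda>n. suminf (\<lambda>k. A k n)) \<longlonglongrightarrow> suminf b)"
    using tannerys_theorem[where a=A and b=b and M=M and F=sequentially, OF lim _ sM]
    using bnd by (auto intro: always_eventually)
  have sf: "suminf (\<lambda>k. A k n) = (\<Prod>i<n. (1 - (-(a*x)) * q ^ i)) * (\<Prod>i<n. (1 - (q / (-(a*x))) * q ^ i)) + gb q (2*n) n" for n
  proof -
    have "suminf (\<lambda>k. A k n) = (\<Sum>k\<le>n. A k n)" by (rule suminf_finite) (auto simp: A_def)
    also have "\<dots> = (\<Sum>k\<le>n. gb q (2*n) (n+k) * a^(k\<^sup>2) * x^k + gb q (2*n) (n-k) * a^(k\<^sup>2) * (1/x)^k)"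
      by (rule sum.cong) (auto simp: A_def)
    also have "\<dots> = (\<Prod>i<n. (1 - (-(a*x)) * q ^ i)) * (\<Prod>i<n. (1 - (q / (-(a*x))) * q ^ i)) + gb q (2*n) n"
      unfolding q_def by (rule fin_jtp[OF a0 a1 x0])
    finally show ?thesis .
  qed
  have "(\<lambda>n. (\<Prod>i<n. (1 - (-(a*x)) * q ^ i)) * (\<Prod>i<n. (1 - (q / (-(a*x))) * q ^ i)) + gb q (2*n) n)
      \<longlonglongrightarrow> qpoch (-(a*x)) q * qpoch (q / (-(a*x))) q + 1 / L"
    unfolding L_def by (intro tendsto_add tendsto_mult qpoch_lim[OF q1]) (use gb_lims(2)[OF q1, of 0] in simp)
  then have "suminf b = qtheta (-(a*x)) q + 1 / L"
    using tan sf by (auto simp: qtheta_def intro: LIMSEQ_unique)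
  moreover have "summable b" using tan summable_norm_cancel by blast
  ultimately have "b sums (qtheta (-(a*x)) q + 1 / L)" by (metis summable_sums)
  then have "(\<lambda>k. L * b k) sums (L * (qtheta (-(a*x)) q + 1 / L))" by (rule sums_mult)
  moreover have "L * b k = a^(k\<^sup>2) * (x^k + (1/x)^k)" for k using L0 by (simp add: b_def)
  moreover have "L * (qtheta (-(a*x)) q + 1 / L) = qpoch (a^2) (a^2) * qtheta (-(a*x)) (a^2) + 1"
    using L0 by (simp add: L_def q_def algebra_simps)
  ultimately show ?thesis by simp
qed



lemma dissect:
  fixes a x :: complex
  assumes a0: "a \<noteq> 0" and a1: "norm a < 1" and x0: "x \<noteq> 0"
  shows "qpoch (a^2) (a^2) * qtheta (-(a*x)) (a^2)
       = qpoch ((a^4)^2) ((a^4)^2) * qtheta (-(a^4*x^2)) ((a^4)^2)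
       + a * x * (qpoch ((a^4)^2) ((a^4)^2) * qtheta (-((a^4)^2*x^2)) ((a^4)^2))"
proof -
  define T where "T m = a^(m\<^sup>2) * (x^m + (1/x)^m)" for m
  define S1 where "S1 = qpoch (a^2) (a^2) * qtheta (-(a*x)) (a^2) + 1"
  define S2 where "S2 = qpoch ((a^4)^2) ((a^4)^2) * qtheta (-(a^4*x^2)) ((a^4)^2) + 1"
  define S3 where "S3 = qpoch ((a^4)^2) ((a^4)^2) * qtheta (-((a^4)^2*x^2)) ((a^4)^2) + 1"
  have a4: "a^4 \<noteq> 0" "norm (a^4) < 1" using a0 a1 by (auto simp: norm_power power_less_one_iff)
  have J1: "T sums S1" unfolding T_def S1_def by (rule jtp[OF a0 a1 x0])
  have J2: "(\<lambda>j. T (2*j)) sums S2"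
  proof -
    have "(\<lambda>j. (a^4)^(j\<^sup>2) * ((x^2)^j + (1/x^2)^j)) sums S2"
      unfolding S2_def using jtp[OF a4 , of "x^2"] x0 by (simp add: mult.assoc)
    moreover have "(a^4)^(j\<^sup>2) * ((x^2)^j + (1/x^2)^j) = T (2*j)" for j
    proof -
      have xx: "x^(j*2) = x^j*x^j" by (simp add: mult_2_right power_add)
      show ?thesis
        unfolding T_def by (simp add: power2_eq_square power_mult[symmetric] algebra_simps power_one_over xx)
    qed
    ultimately show ?thesis by simp
  qed
  define V where "V j = a * x * ((a^4)^(j\<^sup>2) * ((a^4*x^2)^j + (1/(a^4*x^2))^j))" for j
  have J3: "V sums (a * x * S3)"
  proof -
    have "(\<lambda>j. (a^4)^(j\<^sup>2) * ((a^4*x^2)^j + (1/(a^4*x^2))^j)) sums S3"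
    proof -
      have "a^4 * (a^4 * x^2) = (a^4)^2 * x^2" by (simp add: power2_eq_square mult_ac)
      then show ?thesis unfolding S3_def using jtp[OF a4 , of "a^4*x^2"] x0 a0 by simp
    qed
    then show ?thesis unfolding V_def by (rule sums_mult)
  qed
  define u where "u j = a * x * ((a^4)^(j\<^sup>2) * (a^4*x^2)^j)" for j
  define v where "v j = a * x * ((a^4)^(j\<^sup>2) * (1/(a^4*x^2))^j)" for j
  have su: "summable u"
  proof -
    have "summable (\<lambda>j. norm (a * x) * (norm (a^4) ^ (j\<^sup>2) * norm (a^4*x^2) ^ j))"
      using a4 by (intro summable_mult summable_sq) auto
    moreover have "norm (u j) = norm (a * x) * (norm (a^4) ^ (j\<^sup>2) * norm (a^4*x^2) ^ j)" for j
      unfolding u_def by (simp add: norm_mult norm_power)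
    ultimately have "summable (\<lambda>j. norm (u j))" by simp
    then show ?thesis by (rule summable_norm_cancel)
  qed
  have Vuv: "V j = u j + v j" for j unfolding V_def u_def v_def by (simp add: algebra_simps)
  have sv: "v sums (a * x * S3 - suminf u)"
  proof -
    have "(\<lambda>j. V j - u j) sums (a * x * S3 - suminf u)" using sums_diff[OF J3 summable_sums[OF su]] .
    then show ?thesis by (simp add: Vuv)
  qed
  have sv': "(\<lambda>j. v (Suc j)) sums (a * x * S3 - suminf u - a * x)"
    using sv by (subst sums_Suc_iff) (simp add: v_def)
  have odd_eq: "T (2*j+1) = u j + v (Suc j)" for j
  proof -
    define A where "A = a^(4*(j*j))"
    define B where "B = a^(4*j)"
    define X where "X = x^(2*j)"
    have B0: "B \<noteq> 0" "X \<noteq> 0" using a0 x0 by (auto simp: B_def X_def)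
    have e1: "(2*j+1)\<^sup>2 = 4*(j*j) + 4*j + 1" by (simp add: power2_eq_square algebra_simps)
    have e2: "(Suc j)\<^sup>2 = j*j + 2*j + 1" by (simp add: power2_eq_square algebra_simps)
    have f1: "a^((2*j+1)\<^sup>2) = A*B*a" unfolding e1 A_def B_def by (simp only: power_add power_one_right)
    have f2: "x^(2*j+1) = X*x" unfolding X_def by (simp only: power_add power_one_right)
    have f3: "(1/x)^(2*j+1) = 1/(X*x)" unfolding power_one_over f2 ..
    have f4: "(a^4)^(j\<^sup>2) = A" unfolding A_def power2_eq_square by (simp only: power_mult)
    have f5: "(a^4*x^2)^j = B*X" unfolding B_def X_def by (simp only: power_mult_distrib power_mult)
    have f6: "(a^4)^((Suc j)\<^sup>2) = A*(B*B*a^4)"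
      unfolding e2 A_def B_def by (simp only: power_add power_mult power_one_right mult_2 mult.assoc)
    have f7: "(1/(a^4*x^2))^(Suc j) = 1/(B*X*(a^4*x^2))"
      unfolding power_one_over power_Suc f5 by (simp add: mult_ac)
    show ?thesis unfolding T_def u_def v_def f1 f2 f3 f4 f5 f6 f7 using a0 x0 B0
      by (simp add: field_simps power2_eq_square)
  qed
  have J4: "(\<lambda>j. T (2*j+1)) sums (a * x * S3 - a * x)"
    using sums_add[OF summable_sums[OF su] sv'] unfolding odd_eq[symmetric] by simp
  have J5: "(\<lambda>j. T (2*j) + T (2*j+1)) sums S1"
  proof -
    have "(\<lambda>n. sum T {n * 2 ..< n * 2 + 2}) sums S1" by (rule sums_group[OF J1]) simp
    moreover have "sum T {n * 2 ..< n * 2 + 2} = T (2*n) + T (2*n+1)" for n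
      by (simp add: numeral_2_eq_2 mult.commute)
    ultimately show ?thesis by simp
  qed
  have "S1 = S2 + (a * x * S3 - a * x)"
    using sums_unique2[OF J5 sums_add[OF J2 J4]] .
  then show ?thesis unfolding S1_def S2_def S3_def by (simp add: algebra_simps)
qed



lemma qpoch_zero_zero: "qpoch 0 0 = 1"
  by (simp add: qpoch_def)

theorem mainTheorem7:
  fixes q q14 x y u w :: complex
  assumes hq: "norm q < 1"
    and h14: "q14 ^ 4 = q"
    and hx: "x \<noteq> 0" and hy: "y \<noteq> 0" and hu: "u \<noteq> 0" and hv: "w \<noteq> 0"
  shows "4 * q * x * y * u * w * qthetas [-(q^2*x^2), -(q^2*y^2), -(q^2*u^2), -(q^2*w^2)] (q^2)
       + 4 * q14^2 * x * y * qthetas [-(q^2*x^2), -(q^2*y^2), -(q*u^2), -(q*w^2)] (q^2)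
       + 4 * q14^2 * u * w * qthetas [-(q*x^2), -(q*y^2), -(q^2*u^2), -(q^2*w^2)] (q^2)
       + 4 * qthetas [-(q*x^2), -(q*y^2), -(q*u^2), -(q*w^2)] (q^2)
     = qpoch (q14^2) (q14^2) ^ 4 / qpoch (q^2) (q^2) ^ 4 *
       ( qthetas [-(q14*x), -(q14*y), -(q14*u), -(q14*w)] (q14^2)
       + qthetas [q14*x, q14*y, -(q14*u), -(q14*w)] (q14^2)
       + qthetas [-(q14*x), -(q14*y), q14*u, q14*w] (q14^2)
       + qthetas [q14*x, q14*y, q14*u, q14*w] (q14^2))"
proof (cases "q = 0")
  case True
  then have "q14 = 0" using h14 by simp
  then show ?thesis using True by (simp add: qthetas_def qtheta_def qpoch_zero_zero)
next
  case False
  define a where "a = q14"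
  have a0: "a \<noteq> 0" using False h14 a_def by auto
  have a1: "norm a < 1"
  proof -
    have "norm a ^ 4 = norm q" unfolding a_def h14[symmetric] norm_power ..
    then have "norm a ^ 4 < 1" using hq by simp
    then show ?thesis using power_less_one_iff[of "norm a" 4] by simp
  qed
  have q4: "q = a^4" using h14 a_def by simp
  define P where "P = qpoch (a^2) (a^2)"
  define Q where "Q = qpoch (q^2) (q^2)"
  have P0: "P \<noteq> 0" unfolding P_def using a1 by (intro qpoch_nz) (simp add: norm_power power_less_one_iff)
  have Q0: "Q \<noteq> 0" unfolding Q_def using hq by (intro qpoch_nz) (simp add: norm_power power_less_one_iff)
  define k where "k = Q / P"
  define E where "E z = qtheta (-(q*z^2)) (q^2)" for z
  define C where "C z = qtheta (-(q^2*z^2)) (q^2)" for z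
  have hm: "qtheta (-(a*z)) (a^2) = k * (E z + a * z * C z)" if "z \<noteq> 0" for z
  proof -
    have "P * qtheta (-(a*z)) (a^2) = Q * E z + a * z * (Q * C z)"
      using dissect[OF a0 a1 that] unfolding P_def Q_def E_def C_def q4 .
    then show ?thesis using P0 unfolding k_def by (simp add: field_simps)
  qed
  have hp: "qtheta (a*z) (a^2) = k * (E z - a * z * C z)" if "z \<noteq> 0" for z
  proof -
    have "P * qtheta (-(a*(-z))) (a^2) = Q * E (-z) + a * (-z) * (Q * C (-z))"
      using dissect[OF a0 a1, of "-z"] that unfolding P_def Q_def E_def C_def q4 by simp
    moreover have "E (-z) = E z" "C (-z) = C z" by (simp_all add: E_def C_def)
    ultimately show ?thesis using P0 unfolding k_def by (simp add: field_simps)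
  qed
  have Pk: "P ^ 4 / Q ^ 4 * k ^ 4 = 1" using P0 Q0 unfolding k_def by (simp add: field_simps)
  have R: "qthetas [-(a*x), -(a*y), -(a*u), -(a*w)] (a^2)
       + qthetas [a*x, a*y, -(a*u), -(a*w)] (a^2)
       + qthetas [-(a*x), -(a*y), a*u, a*w] (a^2)
       + qthetas [a*x, a*y, a*u, a*w] (a^2)
     = k^4 * (4 * (E x * E y + a^2 * x * y * C x * C y) * (E u * E w + a^2 * u * w * C u * C w))"
    unfolding qthetas_def using hm[OF hx] hm[OF hy] hm[OF hu] hm[OF hv] hp[OF hx] hp[OF hy] hp[OF hu] hp[OF hv]
    by simp (simp add: algebra_simps power2_eq_square power4_eq_xxxx)
  have L: "4 * q * x * y * u * w * qthetas [-(q^2*x^2), -(q^2*y^2), -(q^2*u^2), -(q^2*w^2)] (q^2)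
       + 4 * a^2 * x * y * qthetas [-(q^2*x^2), -(q^2*y^2), -(q*u^2), -(q*w^2)] (q^2)
       + 4 * a^2 * u * w * qthetas [-(q*x^2), -(q*y^2), -(q^2*u^2), -(q^2*w^2)] (q^2)
       + 4 * qthetas [-(q*x^2), -(q*y^2), -(q*u^2), -(q*w^2)] (q^2)
     = 4 * (E x * E y + a^2 * x * y * C x * C y) * (E u * E w + a^2 * u * w * C u * C w)"
    unfolding qthetas_def E_def C_def q4 by (simp add: algebra_simps power2_eq_square power4_eq_xxxx)
  show ?thesis
    unfolding a_def[symmetric] L R P_def[symmetric] Q_def[symmetric]
    using Pk by (simp add: mult.assoc[symmetric])
qed


end
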